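(* Let $T,B,X$ be the unique formal power series in $t$ with $T=1+tT^3$, $B=tT^2$, $X=B(1+X+X^2)$, and let $T(u)$ be the unique formal power series in $t$ (coefficients polynomial in $u$) with $T(u)=1+tuT(u)^2T$. For $j\ge -2$ set $$H_j(u)=(1-X^{j+1})\,X\,T(u)-(1+X)(1-X^{j+2}).$$ Then for every integer $j\ge -1$, $$T_j(u)=T(u)\,\frac{H_j(u)}{H_{j-1}(u)}\cdot\frac{1-X^{j+2}}{1-X^{j+3}}.$$
   Context: A ternary tree is either empty or consists of a root together with three ternary trees (left, middle and right subtrees). Given an integer $j$, embed a ternary tree by giving the root abscissa $j$ and, for a node of abscissa $i$, giving its left child abscissa $i+1$, its middle child abscissa $i$ and its right child abscissa $i-1$. A $j$-positive tree is a ternary tree all of whose nodes have abscissa $\ge 0$ in this embedding (for $j=-1$ only the empty tree). The core of a nonempty ternary tree is the largest subtree containing the root in which every node is reached from the root using only left and middle edges (the core of the empty tree is empty). $T_j(u)=\sum_{\tau} t^{|\tau|}u^{c(\tau)}$, summed over all $j$-positive trees $\tau$, where $|\tau|$ is the number of nodes and $c(\tau)$ the number of core nodes. *)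

theory Defs
  imports "HOL-Computational_Algebra.Polynomial" "HOL-Computational_Algebra.Formal_Power_Series"
          "HOL-Computational_Algebra.Fraction_Field"
begin

datatype ttree = Leaf | Node ttree ttree ttree

fun nodes :: "ttree \<Rightarrow> nat" where
  "nodes Leaf = 0"
| "nodes (Node l m r) = Suc (nodes l + nodes m + nodes r)"

fun core :: "ttree \<Rightarrow> nat" where
  "core Leaf = 0"
| "core (Node l m r) = Suc (core l + core m)"

text \<open>j-positivity: in the embedding with root abscissa j, every node has abscissa \<ge> 0.\<close>
fun jpos :: "int \<Rightarrow> ttree \<Rightarrow> bool" where
  "jpos j Leaf = True"
| "jpos j (Node l m r) = (0 \<le> j \<and> jpos (j + 1) l \<and> jpos j m \<and> jpos (j - 1) r)"

text \<open>Series in t with coefficients in Z[u].\<close>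
definition Tj :: "int \<Rightarrow> int poly fps" where
  "Tj j = Abs_fps (\<lambda>n. \<Sum>\<tau> \<in> {\<tau>. nodes \<tau> = n \<and> jpos j \<tau>}. monom 1 (core \<tau>))"

definition Tser :: "int poly fps" where
  "Tser = (THE T. T = 1 + fps_X * T ^ 3)"

definition Bser :: "int poly fps" where
  "Bser = fps_X * Tser ^ 2"

definition Xser :: "int poly fps" where
  "Xser = (THE X. X = Bser * (1 + X + X ^ 2))"

definition Tu :: "int poly fps" where
  "Tu = (THE S. S = 1 + fps_X * fps_const [:0, 1:] * S ^ 2 * Tser)"

text \<open>Computations with quotients and negative powers happen in the fraction field.\<close>
definition fr :: "int poly fps \<Rightarrow> int poly fps fract" where
  "fr a = Fract a 1"

definition Hj :: "int \<Rightarrow> int poly fps fract" where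
  "Hj j = (1 - fr Xser powi (j + 1)) * fr Xser * fr Tu - (1 + fr Xser) * (1 - fr Xser powi (j + 2))"

end

theory Submission
  imports Defs
begin

definition agree :: "nat \<Rightarrow> 'a::comm_ring_1 fps \<Rightarrow> 'a fps \<Rightarrow> bool" where
  "agree n f g \<longleftrightarrow> (\<forall>k<n. fps_nth f k = fps_nth g k)"

lemma agree_refl[simp]: "agree n f f" by (simp add: agree_def)
lemma agree_0[simp]: "agree 0 f g" by (simp add: agree_def)

lemma agree_mult:
  assumes "agree n f f'" "agree n g g'" shows "agree n (f*g) (f'*g')"
  unfolding agree_def fps_mult_nth
proof (intro allI impI)
  fix k assume "k<n"
  show "(\<Sum>i=0..k. fps_nth f i * fps_nth g (k-i)) = (\<Sum>i=0..k. fps_nth f' i * fps_nth g' (k-i))"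
    using assms \<open>k<n\<close> unfolding agree_def by (intro sum.cong) auto
qed

lemma agree_add:
  assumes "agree n f f'" "agree n g g'" shows "agree n (f+g) (f'+g')"
  using assms by (simp add: agree_def)

lemma agree_power:
  assumes "agree n f f'" shows "agree n (f^m) (f'^m)"
  by (induction m) (simp_all add: agree_mult assms)

lemma agree_X:
  assumes "agree n f g" shows "agree (Suc n) (fps_X*f) (fps_X*g)"
  using assms by (auto simp: agree_def)

lemma agree_ext: "(\<And>n. agree n f g) \<Longrightarrow> f = g"
  by (rule fps_ext) (auto simp: agree_def)

lemma agree_mono: "agree n f g \<Longrightarrow> m \<le> n \<Longrightarrow> agree m f g"
  by (auto simp: agree_def)

lemma contractive_fix:
  fixes \<Phi> :: "'a::comm_ring_1 fps \<Rightarrow> 'a fps"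
  assumes c: "\<And>n f g. agree n f g \<Longrightarrow> agree (Suc n) (\<Phi> f) (\<Phi> g)"
  shows "\<exists>!f. f = \<Phi> f"
proof -
  define s where "s k = (\<Phi> ^^ k) 0" for k
  have sS: "s (Suc k) = \<Phi> (s k)" for k by (simp add: s_def)
  have A: "\<forall>m\<ge>k. agree k (s k) (s m)" for k
  proof (induction k)
    case (Suc k)
    show ?case
    proof (intro allI impI)
      fix m assume "Suc k \<le> m"
      then obtain m' where m': "m = Suc m'" "k \<le> m'" by (cases m) auto
      show "agree (Suc k) (s (Suc k)) (s m)" using Suc m' c sS by metis
    qed
  qed simp
  define f where "f = Abs_fps (\<lambda>n. fps_nth (s (Suc n)) n)"
  have B: "agree n f (s n)" for n
    unfolding agree_def
  proof (intro allI impI)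
    fix k assume "k<n"
    then have "agree (Suc k) (s (Suc k)) (s n)" using A by simp
    then show "fps_nth f k = fps_nth (s n) k" by (simp add: f_def agree_def)
  qed
  have "f = \<Phi> f"
  proof (rule fps_ext)
    fix n
    have "agree (Suc n) (\<Phi> f) (\<Phi> (s n))" using c B by blast
    then have "fps_nth (\<Phi> f) n = fps_nth (s (Suc n)) n" by (simp add: agree_def sS)
    then show "fps_nth f n = fps_nth (\<Phi> f) n" by (simp add: f_def)
  qed
  moreover have "g = f" if g: "g = \<Phi> g" and f: "f = \<Phi> f" for g f
  proof (rule agree_ext)
    fix n show "agree n g f"
    proof (induction n)
      case (Suc n) then show ?case using c g f by metis
    qed simp
  qed
  ultimately show ?thesis by blast
qed

lemma Tser_eq: "Tser = 1 + fps_X * Tser^3"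
proof -
  have "\<exists>!T::int poly fps. T = 1 + fps_X * T^3"
    by (rule contractive_fix) (intro agree_add agree_refl agree_X agree_power agree_mono[of n _ _ n] | simp)+
  then show ?thesis unfolding Tser_def by (rule theI')
qed

lemma Xser_eq: "Xser = fps_X * (Tser^2 * (1 + Xser + Xser^2))"
proof -
  have "\<exists>!X::int poly fps. X = fps_X * (Tser^2 * (1 + X + X^2))"
    by (rule contractive_fix) (intro agree_add agree_refl agree_X agree_power agree_mult | simp)+
  then have "Xser = fps_X * (Tser^2 * (1 + Xser + Xser^2))"
    unfolding Xser_def Bser_def by (simp add: mult.assoc) (rule theI', simp add: mult.assoc)
  then show ?thesis .
qed

lemma Tu_eq: "Tu = 1 + fps_X * fps_const [:0, 1:] * Tu ^ 2 * Tser"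
proof -
  have "\<exists>!S::int poly fps. S = 1 + fps_X * (fps_const [:0, 1:] * S ^ 2 * Tser)"
    by (rule contractive_fix) (intro agree_add agree_refl agree_X agree_power agree_mult | simp)+
  then show ?thesis unfolding Tu_def by (simp add: mult.assoc) (rule theI', simp add: mult.assoc)
qed


definition ee :: "'a::idom \<Rightarrow> 'a \<Rightarrow> 'a" where "ee X y = (1 - y*X^3)*(1 - y*X^2)"
definition mm :: "'a::idom \<Rightarrow> 'a \<Rightarrow> 'a \<Rightarrow> 'a" where "mm T X y = T*(1 - y*X^4)*(1 - y*X)"
definition gg :: "'a::idom \<Rightarrow> 'a \<Rightarrow> 'a \<Rightarrow> 'a" where "gg U X y = (X - y)*U - (1+X)*(1-y)"
definition dd :: "'a::idom \<Rightarrow> 'a \<Rightarrow> 'a \<Rightarrow> 'a" where "dd U X y = gg U X y * (1 - y*X^2)"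
definition nn :: "'a::idom \<Rightarrow> 'a \<Rightarrow> 'a \<Rightarrow> 'a" where "nn U X y = U * gg U X (y*X) * (1 - y*X)"

lemma idV:
  fixes T t X z :: "'a::idom"
  assumes hT: "t*T^3 = T - 1" and hX: "T*(1+X^2) = 1+X+X^2"
  shows "mm T X (z*X) * ee X (z*X^2) * ee X z = ee X (z*X) * ee X (z*X^2) * ee X z
     + t * mm T X (z*X^2) * mm T X (z*X) * mm T X z"
proof -
  have "mm T X (z*X) * ee X (z*X^2) * ee X z - (ee X (z*X) * ee X (z*X^2) * ee X z
     + t * mm T X (z*X^2) * mm T X (z*X) * mm T X z)
   = (X^18*z^5 - X^17*z^5 - X^16*z^5 - X^16*z^4 + X^15*z^5 + X^14*z^4 + X^13*z^3 + X^12*z^4 - X^10*z^4 - X^10*z^3 - X^9*z^3 - X^9*z^2 + X^7*z^2 + X^6*z^3 + X^5*z^2 + X^4*z - X^3*z^2 - X^3*z - X^2*z + X*z)*(T*(1+X^2) - (1+X+X^2)) - (t*T^3 - (T-1))*((1-z*X^6)*(1-z*X^3)*(1-z*X^5)*(1-z*X^2)*(1-z*X^4)*(1-z*X))"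
    unfolding ee_def mm_def by algebra
  then show ?thesis using hT hX by simp
qed

lemma idU:
  fixes T t X z U c :: "'a::idom"
  assumes hU: "t*c*U^2*T = U - 1"
  shows "nn U X (z*X) * dd U X (z*X^2) * ee X z = dd U X (z*X) * dd U X (z*X^2) * ee X z
     + (t*c) * nn U X (z*X^2) * nn U X (z*X) * mm T X z"
proof -
  have "nn U X (z*X) * dd U X (z*X^2) * ee X z - (dd U X (z*X) * dd U X (z*X^2) * ee X z
     + (t*c) * nn U X (z*X^2) * nn U X (z*X) * mm T X z)
   = - (t*c*U^2*T - (U - 1)) * (gg U X (z*X^3)*(1-z*X^3)*gg U X (z*X^2)*(1-z*X^2)*(1-z*X^4)*(1-z*X))"
    unfolding ee_def mm_def nn_def dd_def gg_def by algebra
  then show ?thesis using hU by simp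
qed

lemma recur_from:
  fixes a b c v0 v1 vm m0 m1 mm x :: "'a::idom"
  assumes "a*v0 = m0" "b*v1 = m1" "c*vm = mm" "m0*b*c = a*b*c + x*m1*m0*mm"
    "a \<noteq> 0" "b \<noteq> 0" "c \<noteq> 0"
  shows "v0 = 1 + x*(v1*v0*vm)"
proof -
  have "a*b*c*(v0 - (1 + x*(v1*v0*vm))) = (a*v0)*b*c - a*b*c - x*(b*v1)*(a*v0)*(c*vm)"
    by algebra
  also have "\<dots> = 0" using assms(1-4) by simp
  finally show ?thesis using assms(5-7) by simp
qed


definition gfs :: "('b \<Rightarrow> nat) \<Rightarrow> ('b \<Rightarrow> bool) \<Rightarrow> ('b \<Rightarrow> 'a::comm_ring_1) \<Rightarrow> 'a fps" where
  "gfs sz P f = Abs_fps (\<lambda>n. \<Sum>a\<in>{a. sz a = n \<and> P a}. f a)"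

lemma gfs_nth: "fps_nth (gfs sz P f) n = (\<Sum>a\<in>{a. sz a = n \<and> P a}. f a)"
  by (simp add: gfs_def)

lemma gfs_mult_finite:
  fixes sz1 :: "'b \<Rightarrow> nat" and sz2 :: "'c \<Rightarrow> nat"
  assumes fa: "\<And>n. finite {a. sz1 a = n \<and> P a}" and fb: "\<And>n. finite {b. sz2 b = n \<and> Q b}"
  shows "finite {ab. (case ab of (a,b) \<Rightarrow> sz1 a + sz2 b) = n \<and> (case ab of (a,b) \<Rightarrow> P a \<and> Q b)}"
proof -
  have "{ab. (case ab of (a,b) \<Rightarrow> sz1 a + sz2 b) = n \<and> (case ab of (a,b) \<Rightarrow> P a \<and> Q b)}
      = (\<Union>i\<in>{0..n}. {a. sz1 a = i \<and> P a} \<times> {b. sz2 b = n - i \<and> Q b})" by auto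
  then show ?thesis using fa fb by simp
qed

lemma gfs_mult:
  fixes f :: "'b \<Rightarrow> 'a::comm_ring_1" and g :: "'c \<Rightarrow> 'a" and sz1 :: "'b \<Rightarrow> nat" and sz2 :: "'c \<Rightarrow> nat"
  assumes fa: "\<And>n. finite {a. sz1 a = n \<and> P a}" and fb: "\<And>n. finite {b. sz2 b = n \<and> Q b}"
  shows "gfs sz1 P f * gfs sz2 Q g = gfs (\<lambda>(a,b). sz1 a + sz2 b) (\<lambda>(a,b). P a \<and> Q b) (\<lambda>(a,b). f a * g b)"
proof (rule fps_ext)
  fix n
  let ?A = "\<lambda>i. {a. sz1 a = i \<and> P a}"
  let ?B = "\<lambda>i. {b. sz2 b = i \<and> Q b}"
  have set: "{ab. (case ab of (a,b) \<Rightarrow> sz1 a + sz2 b) = n \<and> (case ab of (a,b) \<Rightarrow> P a \<and> Q b)}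
      = (\<Union>i\<in>{0..n}. ?A i \<times> ?B (n - i))" by auto
  have "fps_nth (gfs sz1 P f * gfs sz2 Q g) n = (\<Sum>i=0..n. (\<Sum>a\<in>?A i. f a) * (\<Sum>b\<in>?B (n-i). g b))"
    by (simp add: gfs_def fps_mult_nth)
  also have "\<dots> = (\<Sum>i=0..n. \<Sum>ab\<in>?A i \<times> ?B (n-i). (case ab of (a,b) \<Rightarrow> f a * g b))"
    by (simp add: sum_product sum.cartesian_product)
  also have "\<dots> = (\<Sum>ab\<in>(\<Union>i\<in>{0..n}. ?A i \<times> ?B (n - i)). (case ab of (a,b) \<Rightarrow> f a * g b))"
    by (subst sum.UNION_disjoint) (auto simp: fa fb)
  also have "\<dots> = fps_nth (gfs (\<lambda>(a,b). sz1 a + sz2 b) (\<lambda>(a,b). P a \<and> Q b) (\<lambda>(a,b). f a * g b)) n"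
    unfolding gfs_nth set ..
  finally show "fps_nth (gfs sz1 P f * gfs sz2 Q g) n = fps_nth (gfs (\<lambda>(a,b). sz1 a + sz2 b) (\<lambda>(a,b). P a \<and> Q b) (\<lambda>(a,b). f a * g b)) n" .
qed

lemma finite_nodes_le: "finite {\<tau>. nodes \<tau> \<le> n}"
proof (induction n)
  case 0
  have "{\<tau>. nodes \<tau> \<le> 0} \<subseteq> {Leaf}"
  proof
    fix \<tau> assume "\<tau> \<in> {\<tau>. nodes \<tau> \<le> 0}" then show "\<tau> \<in> {Leaf}" by (cases \<tau>) auto
  qed
  then show ?case using finite_subset by blast
next
  case (Suc n)
  let ?S = "{\<tau>. nodes \<tau> \<le> n}"
  have "{\<tau>. nodes \<tau> \<le> Suc n} \<subseteq> insert Leaf ((\<lambda>(l,m,r). Node l m r) ` (?S \<times> ?S \<times> ?S))"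
  proof
    fix \<tau> assume h: "\<tau> \<in> {\<tau>. nodes \<tau> \<le> Suc n}"
    show "\<tau> \<in> insert Leaf ((\<lambda>(l,m,r). Node l m r) ` (?S \<times> ?S \<times> ?S))"
    proof (cases \<tau>)
      case (Node l m r)
      then show ?thesis using h by (auto intro!: image_eqI[where x="(l,m,r)"])
    qed simp
  qed
  then show ?case using Suc finite_subset by blast
qed

lemma finite_nodes: "finite {\<tau>. nodes \<tau> = n \<and> P \<tau>}"
  by (rule finite_subset[OF _ finite_nodes_le[of n]]) auto

lemma gfs_node:
  fixes w w1 w2 w3 :: "ttree \<Rightarrow> 'a::comm_ring_1"
  assumes PN: "\<And>l m r. Pt (Node l m r) \<longleftrightarrow> P1 l \<and> P2 m \<and> P3 r" and PL: "Pt Leaf" and wL: "w Leaf = 1"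
    and wN: "\<And>l m r. w (Node l m r) = c * (w1 l * (w2 m * w3 r))"
  shows "gfs nodes Pt w = 1 + fps_X * (fps_const c * (gfs nodes P1 w1 * (gfs nodes P2 w2 * gfs nodes P3 w3)))"
proof (rule fps_ext)
  fix n
  have prod: "gfs nodes P1 w1 * (gfs nodes P2 w2 * gfs nodes P3 w3) =
     gfs (\<lambda>(a,b). nodes a + (case b of (m,r) \<Rightarrow> nodes m + nodes r)) (\<lambda>(a,b). P1 a \<and> (case b of (m,r) \<Rightarrow> P2 m \<and> P3 r))
       (\<lambda>(a,b). w1 a * (case b of (m,r) \<Rightarrow> w2 m * w3 r))"
    by (simp add: gfs_mult gfs_mult_finite finite_nodes)
  show "fps_nth (gfs nodes Pt w) n = fps_nth (1 + fps_X * (fps_const c * (gfs nodes P1 w1 * (gfs nodes P2 w2 * gfs nodes P3 w3)))) n"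
  proof (cases n)
    case 0
    have "{\<tau>. nodes \<tau> = 0 \<and> Pt \<tau>} = {Leaf}"
    proof (intro equalityI subsetI)
      fix \<tau> assume "\<tau> \<in> {\<tau>. nodes \<tau> = 0 \<and> Pt \<tau>}" then show "\<tau> \<in> {Leaf}" by (cases \<tau>) auto
    qed (simp add: PL)
    then show ?thesis using 0 wL by (simp add: gfs_nth)
  next
    case (Suc k)
    let ?F = "\<lambda>(l::ttree,(m::ttree,r::ttree)). Node l m r"
    let ?D = "{x. (case x of (a,b) \<Rightarrow> nodes a + (case b of (m,r) \<Rightarrow> nodes m + nodes r)) = k \<and>
                  (case x of (a,b) \<Rightarrow> P1 a \<and> (case b of (m,r) \<Rightarrow> P2 m \<and> P3 r))}"
    have seteq: "{\<tau>. nodes \<tau> = Suc k \<and> Pt \<tau>} = ?F ` ?D"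
    proof (intro equalityI subsetI)
      fix \<tau> assume h: "\<tau> \<in> {\<tau>. nodes \<tau> = Suc k \<and> Pt \<tau>}"
      then obtain l m r where "\<tau> = Node l m r" by (cases \<tau>) auto
      then show "\<tau> \<in> ?F ` ?D" using h PN by (auto intro!: image_eqI[where x="(l,m,r)"])
    next
      fix \<tau> assume "\<tau> \<in> ?F ` ?D"
      then show "\<tau> \<in> {\<tau>. nodes \<tau> = Suc k \<and> Pt \<tau>}" using PN by auto
    qed
    have inj: "inj_on ?F ?D" by (auto simp: inj_on_def)
    have "fps_nth (gfs nodes Pt w) n = (\<Sum>x\<in>?D. w (?F x))"
      unfolding gfs_nth Suc seteq by (simp add: sum.reindex[OF inj])
    also have "\<dots> = (\<Sum>x\<in>?D. c * (case x of (a,b) \<Rightarrow> w1 a * (case b of (m,r) \<Rightarrow> w2 m * w3 r)))"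
      by (intro sum.cong) (auto simp: wN)
    also have "\<dots> = c * fps_nth (gfs nodes P1 w1 * (gfs nodes P2 w2 * gfs nodes P3 w3)) k"
      unfolding prod gfs_nth by (simp add: sum_distrib_left)
    finally show ?thesis using Suc by simp
  qed
qed

definition Wg :: "int \<Rightarrow> int poly fps" where
  "Wg j = gfs nodes (jpos j) (\<lambda>_. 1)"

lemma Tj_gfs: "Tj j = gfs nodes (jpos j) (\<lambda>\<tau>. monom 1 (core \<tau>))"
  by (simp add: Tj_def gfs_def)

lemma gfs_neg:
  assumes "j < 0" "w Leaf = 1"
  shows "gfs nodes (jpos j) w = 1"
proof (rule fps_ext)
  fix n
  have "{\<tau>. nodes \<tau> = n \<and> jpos j \<tau>} = (if n = 0 then {Leaf} else {})"
  proof (intro equalityI subsetI)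
    fix \<tau> assume "\<tau> \<in> {\<tau>. nodes \<tau> = n \<and> jpos j \<tau>}"
    then show "\<tau> \<in> (if n = 0 then {Leaf} else {})" using assms by (cases \<tau>) auto
  qed (auto split: if_splits)
  then show "fps_nth (gfs nodes (jpos j) w) n = fps_nth 1 n" using assms by (simp add: gfs_nth)
qed

lemma monom_Suc_add: "monom (1::int) (Suc (a + b)) = [:0, 1:] * (monom 1 a * (monom 1 b * 1))"
  by (simp add: monom_altdef power_add)

lemma Tj_rec:
  assumes "j \<ge> 0"
  shows "Tj j = 1 + fps_X * (fps_const [:0,1:] * (Tj (j+1) * (Tj j * Wg (j-1))))"
  unfolding Tj_gfs Wg_def
  by (rule gfs_node) (use assms in \<open>auto simp: monom_Suc_add\<close>)

lemma Wg_rec: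
  assumes "j \<ge> 0"
  shows "Wg j = 1 + fps_X * (fps_const 1 * (Wg (j+1) * (Wg j * Wg (j-1))))"
  unfolding Wg_def
  by (rule gfs_node) (use assms in auto)

lemma Tj_neg: "Tj (-1) = 1" unfolding Tj_gfs by (rule gfs_neg) auto
lemma Wg_neg: "Wg (-1) = 1" unfolding Wg_def by (rule gfs_neg) auto


lemma family_unique:
  fixes P P' R R' :: "nat \<Rightarrow> 'a::comm_ring_1 fps"
  assumes P0: "P 0 = 1" and P'0: "P' 0 = 1"
    and PR: "\<And>n. n \<ge> 1 \<Longrightarrow> P n = 1 + fps_X * (C * (P (Suc n) * (P n * R (n-1))))"
    and P'R: "\<And>n. n \<ge> 1 \<Longrightarrow> P' n = 1 + fps_X * (C * (P' (Suc n) * (P' n * R' (n-1))))"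
    and RR: "\<And>m n. (\<forall>n. agree m (P n) (P' n)) \<Longrightarrow> agree m (R n) (R' n)"
  shows "P n = P' n"
proof -
  have "\<forall>n. agree m (P n) (P' n)" for m
  proof (induction m)
    case (Suc m)
    show ?case
    proof
      fix n
      show "agree (Suc m) (P n) (P' n)"
      proof (cases "n = 0")
        case True then show ?thesis using P0 P'0 by simp
      next
        case False
        then have n1: "n \<ge> 1" by simp
        have "agree (Suc m) (1 + fps_X * (C * (P (Suc n) * (P n * R (n-1)))))
                 (1 + fps_X * (C * (P' (Suc n) * (P' n * R' (n-1)))))"
          using Suc RR[OF Suc] by (intro agree_add agree_refl agree_X agree_mult) auto
        then show ?thesis using PR[OF n1] P'R[OF n1] by simp
      qed
    qed
  qed simp
  then show ?thesis by (intro agree_ext) auto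
qed

lemma nz0: "fps_nth (f::'a::comm_ring_1 fps) 0 \<noteq> 0 \<Longrightarrow> f \<noteq> 0" by auto

lemma T0: "fps_nth Tser 0 = 1"
  using arg_cong[OF Tser_eq, of "\<lambda>f. fps_nth f 0"] by simp
lemma X0: "fps_nth Xser 0 = 0"
  using arg_cong[OF Xser_eq, of "\<lambda>f. fps_nth f 0"] by simp
lemma U0: "fps_nth Tu 0 = 1"
  using arg_cong[OF Tu_eq, of "\<lambda>f. fps_nth f 0"] by simp

lemma relT: "fps_X * Tser^3 = Tser - 1"
  using Tser_eq by (simp add: algebra_simps)
lemma relX: "Tser * (1 + Xser^2) = 1 + Xser + Xser^2"
proof -
  have "Xser * Tser = (fps_X*Tser^3)*(1+Xser+Xser^2)" using Xser_eq by algebra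
  then show ?thesis using relT by algebra
qed
lemma relU: "fps_X * fps_const [:0, 1:] * Tu^2 * Tser = Tu - 1"
  using Tu_eq by (simp add: algebra_simps)

definition "EE k = ee Xser (Xser^k)"
definition "MM k = mm Tser Xser (Xser^k)"
definition "DD k = dd Tu Xser (Xser^k)"
definition "NN k = nn Tu Xser (Xser^k)"
definition "VV k = MM k * fps_right_inverse (EE k) 1"
definition "QQ k = NN k * fps_right_inverse (DD k) (-1)"

lemma Xpow0: "k \<ge> 1 \<Longrightarrow> fps_nth (Xser^k) 0 = 0"
  by (simp add: fps_power_zeroth X0)

lemma EE0: "fps_nth (EE k) 0 = 1"
  by (simp add: EE_def ee_def fps_power_zeroth X0)
lemma gg0: "fps_nth (gg Tu Xser y) 0 = -1"
  by (simp add: gg_def X0 U0 algebra_simps)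
lemma DD0: "fps_nth (DD k) 0 = -1"
  by (simp add: DD_def dd_def gg0 fps_power_zeroth X0)

lemma EV: "EE k * VV k = MM k"
proof -
  have "EE k * VV k = MM k * (EE k * fps_right_inverse (EE k) 1)" by (simp add: VV_def algebra_simps)
  also have "\<dots> = MM k" by (subst fps_right_inverse) (simp_all add: EE0)
  finally show ?thesis .
qed

lemma DQ: "DD k * QQ k = NN k"
proof -
  have "DD k * QQ k = NN k * (DD k * fps_right_inverse (DD k) (-1))" by (simp add: QQ_def algebra_simps)
  also have "\<dots> = NN k" by (subst fps_right_inverse) (simp_all add: DD0)
  finally show ?thesis .
qed

lemma EEnz: "EE k \<noteq> 0" by (rule nz0) (simp add: EE0)
lemma DDnz: "DD k \<noteq> 0" by (rule nz0) (simp add: DD0)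

lemma pows: "Xser^(Suc m) = Xser^m * Xser" "Xser^(Suc (Suc m)) = Xser^m * Xser^2"
  by (simp_all add: power2_eq_square)

lemma VV_rec:
  assumes "n \<ge> 1"
  shows "VV n = 1 + fps_X * (fps_const 1 * (VV (Suc n) * (VV n * VV (n-1))))"
proof -
  obtain m where n: "n = Suc m" using assms by (cases n) auto
  have "VV n = 1 + fps_X * (VV (Suc n) * VV n * VV m)"
  proof (rule recur_from[OF EV EV EV _ EEnz EEnz EEnz])
    show "MM n * EE (Suc n) * EE m = EE n * EE (Suc n) * EE m + fps_X * MM (Suc n) * MM n * MM m"
      unfolding n MM_def EE_def pows using idV[OF relT relX, of "Xser^m"] by (simp add: power2_eq_square mult.assoc)
  qed
  then show ?thesis using n by (simp add: mult.assoc)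
qed

lemma QQ_rec:
  assumes "n \<ge> 1"
  shows "QQ n = 1 + fps_X * (fps_const [:0,1:] * (QQ (Suc n) * (QQ n * VV (n-1))))"
proof -
  obtain m where n: "n = Suc m" using assms by (cases n) auto
  have "QQ n = 1 + (fps_X * fps_const [:0,1:]) * (QQ (Suc n) * QQ n * VV m)"
  proof (rule recur_from[OF DQ DQ EV _ DDnz DDnz EEnz])
    show "NN n * DD (Suc n) * EE m = DD n * DD (Suc n) * EE m + (fps_X * fps_const [:0,1:]) * NN (Suc n) * NN n * MM m"
      unfolding n NN_def DD_def EE_def MM_def pows using idU[OF relU, of Xser "Xser^m"] by (simp add: power2_eq_square mult.assoc)
  qed
  then show ?thesis using n by (simp add: mult.assoc)
qed

lemma VV_0: "VV 0 = 1"
proof -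
  have "MM 0 = EE 0" unfolding MM_def EE_def mm_def ee_def using relX by simp algebra
  then have "EE 0 * VV 0 = EE 0 * 1" using EV by simp
  then show ?thesis using EEnz by simp
qed

lemma QQ_0: "QQ 0 = 1"
proof -
  have "NN 0 = DD 0" unfolding NN_def DD_def nn_def dd_def gg_def by simp algebra
  then have "DD 0 * QQ 0 = DD 0 * 1" using DQ by simp
  then show ?thesis using DDnz by simp
qed

definition "WW k = Wg (int k - 1)"
definition "AA k = Tj (int k - 1)"

lemma WW_rec:
  assumes "n \<ge> 1"
  shows "WW n = 1 + fps_X * (fps_const 1 * (WW (Suc n) * (WW n * WW (n-1))))"
proof -
  have e1: "int (Suc n) - 1 = int n - 1 + 1" by simp
  have e2: "int (n-1) - 1 = int n - 1 - 1" using assms by simp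
  show ?thesis unfolding WW_def e1 e2 by (rule Wg_rec) (use assms in simp)
qed

lemma AA_rec:
  assumes "n \<ge> 1"
  shows "AA n = 1 + fps_X * (fps_const [:0,1:] * (AA (Suc n) * (AA n * WW (n-1))))"
proof -
  have e1: "int (Suc n) - 1 = int n - 1 + 1" by simp
  have e2: "int (n-1) - 1 = int n - 1 - 1" using assms by simp
  show ?thesis unfolding AA_def WW_def e1 e2 by (rule Tj_rec) (use assms in simp)
qed

lemma WW_VV: "WW n = VV n"
  by (rule family_unique[where R=WW and R'=VV, OF _ VV_0 WW_rec VV_rec])
     (auto simp: WW_def Wg_neg)

lemma AA_QQ: "AA n = QQ n"
  by (rule family_unique[where R=WW and R'=VV, OF _ QQ_0 AA_rec QQ_rec])
     (auto simp: AA_def Tj_neg WW_VV)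


lemma fr_mult: "fr (a*b) = fr a * fr b" by (simp add: fr_def)
lemma fr_add: "fr (a+b) = fr a + fr b" by (simp add: fr_def)
lemma fr_diff: "fr (a-b) = fr a - fr b" by (simp add: fr_def)
lemma fr_1: "fr 1 = 1" by (simp add: fr_def fract_collapse)
lemma fr_power: "fr (a^n) = fr a ^ n" by (induction n) (simp_all add: fr_1 fr_mult)
lemma fr_eq0: "fr a = 0 \<longleftrightarrow> a = 0" by (simp add: fr_def Zero_fract_def eq_fract)

lemmas fr_simps = fr_mult fr_add fr_diff fr_1 fr_power

lemma Xnz: "Xser \<noteq> 0"
proof
  assume h: "Xser = 0"
  have "fps_nth Xser 1 = fps_nth (Tser^2 * (1 + Xser + Xser^2)) 0"
    using arg_cong[OF Xser_eq, of "\<lambda>f. fps_nth f 1"] by simp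
  also have "\<dots> = 1" by (simp add: fps_power_zeroth T0 X0)
  finally show False using h by simp
qed

lemma ggnz: "gg Tu Xser y \<noteq> 0" by (rule nz0) (simp add: gg0)

lemma onenz: "k \<ge> 1 \<Longrightarrow> 1 - Xser^k \<noteq> 0"
  by (rule nz0) (simp add: Xpow0)

theorem theorem10:
  fixes j :: int
  assumes "j \<ge> -1"
  shows "fr (Tj j) = fr Tu * (Hj j / Hj (j - 1)) * ((1 - fr Xser powi (j + 2)) / (1 - fr Xser powi (j + 3)))"
proof -
  define k where "k = nat (j + 1)"
  have jk: "j = int k - 1" using assms by (simp add: k_def)
  define x where "x = fr Xser"
  define u where "u = fr Tu"
  have xnz: "x \<noteq> 0" using Xnz by (simp add: x_def fr_eq0)
  have p1: "x powi (j + 1) = x ^ k" by (simp add: jk)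
  have p2: "x powi (j + 2) = x ^ (k+1)"
  proof -
    have e: "j + 2 = int (k+1)" by (simp add: jk)
    show ?thesis unfolding e by (rule power_int_of_nat)
  qed
  have p3: "x powi (j + 3) = x ^ (k+2)"
  proof -
    have e: "j + 3 = int (k+2)" by (simp add: jk)
    show ?thesis unfolding e by (rule power_int_of_nat)
  qed
  have p0: "x powi (j - 1 + 1) * x = x ^ k"
  proof -
    have "x powi (j - 1 + 1) * x = x powi (j - 1 + 1) * x powi 1" by simp
    also have "\<dots> = x powi (j - 1 + 1 + 1)" by (rule power_int_add[symmetric]) (simp add: xnz)
    also have "j - 1 + 1 + 1 = int k" by (simp add: jk)
    finally show ?thesis by simp
  qed
  have p02: "x powi (j - 1 + 2) = x ^ k"
  proof -
    have e: "j - 1 + 2 = int k" by (simp add: jk)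
    show ?thesis unfolding e by (rule power_int_of_nat)
  qed
  define hk where "hk = fr (gg Tu Xser (Xser^k))"
  define hk1 where "hk1 = fr (gg Tu Xser (Xser^k * Xser))"
  have hknz: "hk \<noteq> 0" using ggnz by (simp add: hk_def fr_eq0)
  have d2nz: "1 - x^(k+2) \<noteq> 0" using onenz[of "k+2"] by (simp add: x_def fr_eq0 fr_simps[symmetric])
  have H1: "Hj j = hk1"
    unfolding Hj_def hk1_def gg_def fr_simps x_def[symmetric] u_def[symmetric] p1 p2
    by (simp add: algebra_simps)
  have H0: "Hj (j - 1) = hk"
  proof -
    have "Hj (j - 1) = x * u - (x powi (j - 1 + 1) * x) * u - (1 + x) * (1 - x powi (j - 1 + 2))"
      unfolding Hj_def x_def[symmetric] u_def[symmetric] by (simp add: algebra_simps)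
    also have "\<dots> = hk"
      unfolding p0 p02 hk_def gg_def fr_simps x_def[symmetric] u_def[symmetric] by (simp add: algebra_simps power2_eq_square)
    finally show ?thesis .
  qed
  have N: "fr (NN k) = u * hk1 * (1 - x^(k+1))"
    unfolding NN_def nn_def hk1_def fr_simps x_def[symmetric] u_def[symmetric] by (simp add: algebra_simps power2_eq_square)
  have D: "fr (DD k) = hk * (1 - x^(k+2))"
    unfolding DD_def dd_def hk_def fr_simps x_def[symmetric] u_def[symmetric] by (simp add: algebra_simps power2_eq_square)
  have "Tj j = QQ k" using AA_QQ[of k] by (simp add: AA_def jk)
  then have "fr (DD k) * fr (Tj j) = fr (NN k)" using DQ[of k] by (simp add: fr_simps[symmetric])
  then have "hk * (1 - x^(k+2)) * fr (Tj j) = u * hk1 * (1 - x^(k+1))" using N D by simp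
  then show ?thesis
    unfolding H1 H0 x_def[symmetric] u_def[symmetric] p2 p3
    using hknz d2nz by (simp add: field_simps)
qed

end
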